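(* Let $F$ be a field containing $\mathcal K$ and $w_1,\dots,w_N:\mathbb C\to F$ with $L(u)w_m(u)=0$ for all $m$ and $\xi(u)\neq0$ for all $u$. Let $\{T^{(a)}_m(u)\in F: 0\le a\le n,\ m\in\mathbb Z_{\ge0},\ u\in\mathbb C\}$ satisfy $T^{(0)}_m(u)=T^{(a)}_0(u)=1$, $T^{(n)}_m(u)\ne0$ for all $m,u$, and for all $u$ and $m\ge0$: $T^{(a)}_m(u+\frac{a+m-1}2)=(-1)^m\xi^{(a)}_m(u)/\xi(u)$ for $1\le a\le n-1$; $T^{(n)}_m(u+\frac{n+2m}2)T^{(n)}_m(u+\frac{n+2m-2}2)=\xi^{(n)}_{2m}(u)/\xi(u)$; $T^{(n)}_m(u+\frac{n+2m}2)T^{(n)}_{m+1}(u+\frac{n+2m}2)=\xi^{(n)}_{2m+1}(u)/\xi(u+1)$; $T^{(n)}_m(u+\frac{n+2m}2)^2=\xi^{(n+1)}_{2m}(u)/\xi(u)$. Then for all $u\in\mathbb C$ the $T$-system holds: \[ T^{(a)}_m(u-\tfrac12)T^{(a)}_m(u+\tfrac12)=T^{(a)}_{m+1}(u)T^{(a)}_{m-1}(u)+T^{(a-1)}_m(u)T^{(a+1)}_m(u)\quad(1\le a\le n-2,\ m\ge1), \] \[ T^{(n-1)}_{2m}(u-\tfrac12)T^{(n-1)}_{2m}(u+\tfrac12)=T^{(n-1)}_{2m+1}(u)T^{(n-1)}_{2m-1}(u)+T^{(n-2)}_{2m}(u)T^{(n)}_m(u-\tfrac12)T^{(n)}_m(u+\tfrac12)\quad(m\ge1),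 \] \[ T^{(n-1)}_{2m+1}(u-\tfrac12)T^{(n-1)}_{2m+1}(u+\tfrac12)=T^{(n-1)}_{2m+2}(u)T^{(n-1)}_{2m}(u)+T^{(n-2)}_{2m+1}(u)T^{(n)}_m(u)T^{(n)}_{m+1}(u)\quad(m\ge0), \] \[ T^{(n)}_m(u-1)T^{(n)}_m(u+1)=T^{(n)}_{m+1}(u)T^{(n)}_{m-1}(u)+T^{(n-1)}_{2m}(u)\quad(m\ge1). \]
   Context: Fix an integer $n\ge 2$ and put $N=2n+2$. Let $Q_a(u)$ ($1\le a\le n$, $u\in\mathbb C$) be algebraically independent commuting indeterminates, $\mathcal K$ the field of fractions of $\mathbb Z[Q_a(u)^{\pm1}]$. Put $d_a=1+\delta_{an}$, $Y_a(u)=Q_a(u-\frac{d_a}{2})/Q_a(u+\frac{d_a}{2})$ for $1\le a\le n$, $Y_0(u)=1$. For $1\le a\le n$ set $z_a(u)=\frac{Y_a(u+\frac a2)}{Y_{a-1}(u+\frac{a+1}2)}$, $z_{\bar a}(u)=\frac{Y_{a-1}(u+\frac{2n-a+3}2)}{Y_a(u+\frac{2n-a+4}2)}$; set $x_a(u)=z_a(u)$, $x_{2n+3-a}(u)=z_{\bar a}(u)$ for $1\le a\le n$, and $x_{n+1}(u)=-x_{n+2}(u)=\frac{Q_n(u+\frac n2)Q_n(u+\frac{n+4}2)}{Q_n(u+\frac{n+2}2)^2}$. $D$ is the shift operator ($D\,c(u)=c(u+1)D$), acting on $w:\mathbb C\to F$ by $(\sum_jc_jD^j)w(u)=\sum_jc_j(u)w(u+j)$.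 Define $L(u)=\prod_{i=1}^{N}(x_i(u+n+1-i)-D)$, factors ordered $i=1,\dots,N$ from left to right. Casorati determinants: $[i_1,\dots,i_m]$ is the function $u\mapsto\det(w_r(u+i_s))_{1\le r,s\le m}$. For $0\le a\le N$, $m\ge0$: $\xi^{(a)}_m(u)=[0,1,\dots,a-1,a+m,a+m+1,\dots,N+m-1]$ and $\xi(u)=[0,1,\dots,N-1]$. *)

theory Defs
  imports Complex_Main "Jordan_Normal_Form.Determinant"
begin

text \<open>Algebraic independence over the integers of a family q indexed by I,
  written out literally: no nonzero integer polynomial (given by its finitely
  supported coefficient function c on exponent vectors e, whose support lies in a
  finite set S of indeterminates) vanishes at q.\<close>
definition alg_indep_int :: "('i \<Rightarrow> 'f::field) \<Rightarrow> 'i set \<Rightarrow> bool" where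
  "alg_indep_int q I \<longleftrightarrow>
     (\<forall>S (c :: ('i \<Rightarrow> nat) \<Rightarrow> int).
        finite S \<and> S \<subseteq> I \<and> finite {e. c e \<noteq> 0} \<and>
        (\<forall>e. c e \<noteq> 0 \<longrightarrow> (\<forall>i. i \<notin> S \<longrightarrow> e i = 0)) \<and>
        (\<Sum>e\<in>{e. c e \<noteq> 0}. of_int (c e) * (\<Prod>i\<in>S. q i ^ e i)) = 0
        \<longrightarrow> (\<forall>e. c e = 0))"

definition dd :: "nat \<Rightarrow> nat \<Rightarrow> complex" where
  "dd n a = (if a = n then 2 else 1)"

text \<open>Y_a(u); Y_0 = 1.  q a u stands for the image of Q_a(u) in F.\<close>
definition Yf :: "(nat \<Rightarrow> complex \<Rightarrow> 'f::field) \<Rightarrow> nat \<Rightarrow> nat \<Rightarrow> complex \<Rightarrow> 'f" where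
  "Yf q n a u = (if a = 0 then 1 else q a (u - dd n a / 2) / q a (u + dd n a / 2))"

definition zf :: "(nat \<Rightarrow> complex \<Rightarrow> 'f::field) \<Rightarrow> nat \<Rightarrow> nat \<Rightarrow> complex \<Rightarrow> 'f" where
  "zf q n a u = Yf q n a (u + of_nat a / 2) / Yf q n (a - 1) (u + (of_nat a + 1) / 2)"

definition zbarf :: "(nat \<Rightarrow> complex \<Rightarrow> 'f::field) \<Rightarrow> nat \<Rightarrow> nat \<Rightarrow> complex \<Rightarrow> 'f" where
  "zbarf q n a u = Yf q n (a - 1) (u + (2 * of_nat n - of_nat a + 3) / 2)
                   / Yf q n a (u + (2 * of_nat n - of_nat a + 4) / 2)"

text \<open>x_i(u) for 1 \<le> i \<le> N = 2n+2.\<close>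
definition xf :: "(nat \<Rightarrow> complex \<Rightarrow> 'f::field) \<Rightarrow> nat \<Rightarrow> nat \<Rightarrow> complex \<Rightarrow> 'f" where
  "xf q n i u =
     (let x0 = q n (u + of_nat n / 2) * q n (u + (of_nat n + 4) / 2)
               / (q n (u + (of_nat n + 2) / 2))^2 in
      if 1 \<le> i \<and> i \<le> n then zf q n i u
      else if i = n + 1 then x0
      else if i = n + 2 then - x0
      else zbarf q n (2 * n + 3 - i) u)"

text \<open>Action of L(u) = prod_{i=1..N} (x_i(u+n+1-i) - D) (ordered left to right)
  on w : C -> F, where (c(u) - D) w (u) = c(u) w(u) - w(u+1).\<close>
definition applyL :: "(nat \<Rightarrow> complex \<Rightarrow> 'f::field) \<Rightarrow> nat \<Rightarrow> (complex \<Rightarrow> 'f) \<Rightarrow> complex \<Rightarrow> 'f" where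
  "applyL q n w = foldr (\<lambda>i f. \<lambda>u. xf q n i (u + of_nat n + 1 - of_nat i) * f u - f (u + 1))
                        [1..<2 * n + 3] w"

text \<open>Casorati determinant [idx 0, ..., idx (N-1)] of w_1..w_N.\<close>
definition casorati :: "nat \<Rightarrow> (nat \<Rightarrow> complex \<Rightarrow> 'f::field) \<Rightarrow> (nat \<Rightarrow> nat) \<Rightarrow> complex \<Rightarrow> 'f" where
  "casorati N w idx u = det (mat N N (\<lambda>(r, s). w (r + 1) (u + of_nat (idx s))))"

definition xi_am :: "nat \<Rightarrow> (nat \<Rightarrow> complex \<Rightarrow> 'f::field) \<Rightarrow> nat \<Rightarrow> nat \<Rightarrow> complex \<Rightarrow> 'f" where
  "xi_am N w a m = casorati N w (\<lambda>s. if s < a then s else s + m)"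

definition xi0 :: "nat \<Rightarrow> (nat \<Rightarrow> complex \<Rightarrow> 'f::field) \<Rightarrow> complex \<Rightarrow> 'f" where
  "xi0 N w = casorati N w (\<lambda>s. s)"

end

theory Submission
  imports Defs
begin

definition dt :: "nat \<Rightarrow> (nat \<Rightarrow> nat \<Rightarrow> 'a::comm_ring_1) \<Rightarrow> 'a" where
  "dt N f = det (mat N N (\<lambda>(r,s). f r s))"

lemma dt_cong:
  assumes "\<And>r s. r < N \<Longrightarrow> s < N \<Longrightarrow> f r s = g r s"
  shows "dt N f = dt N g"
  unfolding dt_def by (rule arg_cong[where f=det], rule eq_matI, auto simp: assms)

lemma dt_ident_cols:
  assumes "s1 < N" "s2 < N" "s1 \<noteq> s2" "\<And>r. r < N \<Longrightarrow> f r s1 = f r s2"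
  shows "dt N f = 0"
  unfolding dt_def
  by (rule det_identical_columns[of _ N s1 s2]) (auto simp: assms intro!: eq_vecI)

lemma dt_ins:
  assumes p: "p \<le> M"
  shows "dt (Suc M) (\<lambda>r s. if s < p then T r s else if s = p then v r else T r (s - 1))
    = (\<Sum>r<Suc M. (-1)^(r+p) * v r * dt M (\<lambda>r' s. T (insert_index r r') s))"
proof -
  let ?A = "mat (Suc M) (Suc M) (\<lambda>(r,s). if s < p then T r s else if s = p then v r else T r (s - 1))"
  have A: "?A \<in> carrier_mat (Suc M) (Suc M)" by auto
  have "det ?A = (\<Sum>i<Suc M. ?A $$ (i,p) * cofactor ?A i p)"
    by (rule laplace_expansion_column[OF A]) (use p in auto)
  also have "\<dots> = (\<Sum>r<Suc M. (-1)^(r+p) * v r * dt M (\<lambda>r' s. T (insert_index r r') s))"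
  proof (rule sum.cong[OF refl])
    fix r assume r: "r \<in> {..<Suc M}"
    have "mat_delete ?A r p = mat M M (\<lambda>(r',s). T (insert_index r r') s)"
      unfolding mat_delete_def insert_index_def
      by (rule eq_matI) (use p r in auto)
    thus "?A $$ (r,p) * cofactor ?A r p = (-1)^(r+p) * v r * dt M (\<lambda>r' s. T (insert_index r r') s)"
      using r p unfolding cofactor_def dt_def by simp
  qed
  finally show ?thesis unfolding dt_def by simp
qed

lemma vec_ident:
  assumes r: "r < N"
  shows "(\<Sum>k<Suc N. (-1)^k * U r k * dt N (\<lambda>r' s. U r' (insert_index k s))) = 0"
proof -
  let ?A = "mat (Suc N) (Suc N) (\<lambda>(i,j). if i = 0 then U r j else U (i-1) j)"
  have A: "?A \<in> carrier_mat (Suc N) (Suc N)" by auto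
  have "det ?A = 0"
    by (rule det_identical_rows[OF A, of 0 "Suc r"]) (use r in \<open>auto intro!: eq_vecI\<close>)
  moreover have "det ?A = (\<Sum>j<Suc N. ?A $$ (0,j) * cofactor ?A 0 j)"
    by (rule laplace_expansion_row[OF A]) auto
  moreover have "\<dots> = (\<Sum>k<Suc N. (-1)^k * U r k * dt N (\<lambda>r' s. U r' (insert_index k s)))"
  proof (rule sum.cong[OF refl])
    fix k assume k: "k \<in> {..<Suc N}"
    have "mat_delete ?A 0 k = mat N N (\<lambda>(r',s). U r' (insert_index k s))"
      unfolding mat_delete_def insert_index_def
      by (rule eq_matI) (use k in auto)
    thus "?A $$ (0,k) * cofactor ?A 0 k = (-1)^k * U r k * dt N (\<lambda>r' s. U r' (insert_index k s))"
      using k unfolding cofactor_def dt_def by simp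
  qed
  ultimately show ?thesis by simp
qed

definition rem2 :: "nat \<Rightarrow> nat \<Rightarrow> nat \<Rightarrow> nat" where
  "rem2 a b s = (if s < a then s else if Suc s < b then Suc s else Suc (Suc s))"

lemma pluecker:
  fixes V :: "nat \<Rightarrow> nat \<Rightarrow> 'a::comm_ring_1"
  assumes ij: "i < j" and jk: "j < k" and kl: "k < l" and l: "l \<le> Suc (Suc M)"
  defines "D \<equiv> \<lambda>a b. dt (Suc M) (\<lambda>r s. V r (rem2 a b s))"
  shows "D i k * D j l = D i j * D k l + D i l * D j k"
proof -
  define rem3 where "rem3 s = (if s < i then s else if Suc s < j then Suc s
     else if Suc (Suc s) < k then Suc (Suc s) else Suc (Suc (Suc s)))" for s
  define T where "T r s = V r (rem3 s)" for r s
  define C where "C r = dt M (\<lambda>r' s. T (insert_index r r') s)" for r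
  define E where "E p = (\<Sum>r<Suc M. (-1)^r * V r p * C r)" for p
  have insE: "dt (Suc M) (\<lambda>r s. if s < p then T r s else if s = p then V r p' else T r (s - 1))
      = (-1)^p * E p'" if "p \<le> M" for p p'
  proof -
    have "dt (Suc M) (\<lambda>r s. if s < p then T r s else if s = p then V r p' else T r (s - 1))
       = (\<Sum>r<Suc M. (-1)^(r+p) * V r p' * dt M (\<lambda>r' s. T (insert_index r r') s))"
      by (rule dt_ins[OF that])
    also have "\<dots> = (-1)^p * E p'"
      unfolding E_def C_def sum_distrib_left
      by (rule sum.cong) (auto simp: power_add ac_simps)
    finally show ?thesis .
  qed
  have e1: "D j k = (-1)^i * E i"
  proof -
    have "D j k = dt (Suc M) (\<lambda>r s. if s < i then T r s else if s = i then V r i else T r (s - 1))"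
      unfolding D_def
      by (rule dt_cong) (use ij jk kl l in \<open>auto simp: T_def rem3_def rem2_def\<close>)
    also have "\<dots> = (-1)^i * E i" by (rule insE) (use ij jk kl l in auto)
    finally show ?thesis .
  qed
  have e2: "D i k = (-1)^(j-1) * E j"
  proof -
    have "D i k = dt (Suc M) (\<lambda>r s. if s < j-1 then T r s else if s = j-1 then V r j else T r (s - 1))"
      unfolding D_def
      by (rule dt_cong) (use ij jk kl l in \<open>auto simp: T_def rem3_def rem2_def\<close>)
    also have "\<dots> = (-1)^(j-1) * E j" by (rule insE) (use ij jk kl l in auto)
    finally show ?thesis .
  qed
  have e3: "D i j = (-1)^(k-2) * E k"
  proof -
    have kk: "Suc (Suc (k - 2)) = k" using ij jk by arith
    have "D i j = dt (Suc M) (\<lambda>r s. if s < k-2 then T r s else if s = k-2 then V r k else T r (s - 1))"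
      unfolding D_def
      by (rule dt_cong) (use ij jk kl l kk in \<open>auto simp: T_def rem3_def rem2_def\<close>)
    also have "\<dots> = (-1)^(k-2) * E k" by (rule insE) (use ij jk kl l in auto)
    finally show ?thesis .
  qed
  define U where "U r p = V r (if p < l then p else Suc p)" for r p
  define DD where "DD p = dt (Suc M) (\<lambda>r' s. U r' (insert_index p s))" for p
  define F where "F p = (\<Sum>r<Suc M. (-1)^r * U r p * C r)" for p
  have Dpl: "DD p = D p l" if "p < l" for p
    unfolding DD_def D_def
    by (rule dt_cong) (use that in \<open>auto simp: U_def insert_index_def rem2_def\<close>)
  have Fp: "F p = E p" if "p < l" for p
    unfolding F_def E_def U_def using that by simp
  have F0: "F p = 0" if p: "p < Suc (Suc M)" "p \<notin> {i,j,k}" for p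
  proof -
    define p' where "p' = (if p < l then p else Suc p)"
    have p'1: "p' \<notin> {i,j,k}" "p' \<le> Suc (Suc M)" using p ij jk kl l unfolding p'_def by auto
    define s0 where "s0 = (if p' < i then p' else if p' < j then p' - 1 else if p' < k then p' - 2 else p' - 3)"
    have s0: "s0 < M" "rem3 s0 = p'"
      using p'1 ij jk kl l unfolding s0_def rem3_def by auto
    have "F p = E p'" unfolding F_def E_def U_def p'_def by simp
    also have "\<dots> = (-1)^0 * E p'" by simp
    also have "\<dots> = dt (Suc M) (\<lambda>r s. if s < 0 then T r s else if s = 0 then V r p' else T r (s - 1))"
      by (rule insE[symmetric]) simp
    also have "\<dots> = 0"
      by (rule dt_ident_cols[of 0 _ "Suc s0"]) (use s0 in \<open>auto simp: T_def\<close>)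
    finally show ?thesis .
  qed
  have "0 = (\<Sum>r<Suc M. (-1)^r * C r * (\<Sum>p<Suc (Suc M). (-1)^p * U r p * DD p))"
    unfolding DD_def using vec_ident[of _ "Suc M" U] by simp
  also have "\<dots> = (\<Sum>p<Suc (Suc M). (-1)^p * DD p * F p)"
    unfolding F_def sum_distrib_left
    by (subst sum.swap) (rule sum.cong[OF refl], rule sum.cong[OF refl], simp add: ac_simps)
  also have "\<dots> = (\<Sum>p\<in>{i,j,k}. (-1)^p * DD p * F p)"
    by (rule sum.mono_neutral_right) (use ij jk kl l F0 in auto)
  also have "\<dots> = (-1)^i * DD i * F i + (-1)^j * DD j * F j + (-1)^k * DD k * F k"
    using ij jk by (simp add: algebra_simps)
  also have "\<dots> = D i l * D j k - D j l * D i k + D k l * D i j"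
  proof -
    have "F i = (-1)^i * D j k" "F j = (-1)^(j-1) * D i k" "F k = (-1)^(k-2) * D i j"
      using e1 e2 e3 Fp ij jk kl by auto
    moreover have "DD i = D i l" "DD j = D j l" "DD k = D k l" using Dpl ij jk kl by auto
    moreover have "(-1::'a)^j * (-1)^(j-1) = -1" "(-1::'a)^k * (-1)^(k-2) = 1"
    proof -
      obtain j' where "j = Suc j'" using ij by (cases j) auto
      thus "(-1::'a)^j * (-1)^(j-1) = -1" by simp
      obtain k' where "k = Suc (Suc k')" using ij jk by (cases k; cases "k - 1") auto
      thus "(-1::'a)^k * (-1)^(k-2) = 1" by simp
    qed
    ultimately show ?thesis by (simp add: algebra_simps)
  qed
  finally show ?thesis by (simp add: algebra_simps)
qed

lemma cas_dt: "casorati N w idx u = dt N (\<lambda>r s. w (r+1) (u + of_nat (idx s)))"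
  unfolding casorati_def dt_def by simp

lemma cas_eq:
  assumes "\<And>s. s < N \<Longrightarrow> idx1 s + k = idx2 s"
  shows "casorati N w idx2 u = casorati N w idx1 (u + of_nat k)"
  unfolding cas_dt
  by (rule dt_cong) (simp add: assms[symmetric] add_ac)

lemma cas_pl:
  fixes w :: "nat \<Rightarrow> complex \<Rightarrow> 'f::field"
  assumes a: "1 \<le> a" "a < N" and m: "1 \<le> m"
  shows "xi_am N w a m (u+1) * xi_am N w a m u
     = xi_am N w (a-1) m (u+1) * xi_am N w (a+1) m u + xi_am N w a (m-1) (u+1) * xi_am N w a (m+1) u"
proof -
  obtain M where N: "N = Suc M" using a by (cases N) auto
  define g where "g c = (if c \<le> a then c else c + m - 1)" for c
  define V where "V r c = w (r+1) (u + of_nat (g c))" for r c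
  define D where "D \<equiv> \<lambda>a b. dt (Suc M) (\<lambda>r s. V r (rem2 a b s))"
  have P: "D 0 (a+1) * D a (N+1) = D 0 a * D (a+1) (N+1) + D 0 (N+1) * D a (a+1)"
    unfolding D_def by (rule pluecker) (use a N in auto)
  have DD: "D x y = casorati N w (\<lambda>s. g (rem2 x y s)) u" for x y
    unfolding D_def cas_dt V_def N ..
  have 1: "D 0 (a+1) = xi_am N w a m (u+1)"
  proof -
    have "casorati N w (\<lambda>s. g (rem2 0 (a+1) s)) u = casorati N w (\<lambda>s. if s < a then s else s+m) (u + of_nat 1)"
      by (rule cas_eq) (use a m in \<open>auto simp: g_def rem2_def\<close>)
    thus ?thesis unfolding DD xi_am_def by simp
  qed
  have 2: "D a (N+1) = xi_am N w a m u"
  proof -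
    have "casorati N w (\<lambda>s. g (rem2 a (N+1) s)) u = casorati N w (\<lambda>s. if s < a then s else s+m) (u + of_nat 0)"
      by (rule cas_eq) (use a m in \<open>auto simp: g_def rem2_def\<close>)
    thus ?thesis unfolding DD xi_am_def by simp
  qed
  have 3: "D 0 a = xi_am N w (a-1) m (u+1)"
  proof -
    have "casorati N w (\<lambda>s. g (rem2 0 a s)) u = casorati N w (\<lambda>s. if s < a-1 then s else s+m) (u + of_nat 1)"
      by (rule cas_eq) (use a m in \<open>auto simp: g_def rem2_def\<close>)
    thus ?thesis unfolding DD xi_am_def by simp
  qed
  have 4: "D (a+1) (N+1) = xi_am N w (a+1) m u"
  proof -
    have "casorati N w (\<lambda>s. g (rem2 (a+1) (N+1) s)) u = casorati N w (\<lambda>s. if s < a+1 then s else s+m) (u + of_nat 0)"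
      by (rule cas_eq) (use a m in \<open>auto simp: g_def rem2_def\<close>)
    thus ?thesis unfolding DD xi_am_def by simp
  qed
  have 5: "D 0 (N+1) = xi_am N w a (m-1) (u+1)"
  proof -
    have "casorati N w (\<lambda>s. g (rem2 0 (N+1) s)) u = casorati N w (\<lambda>s. if s < a then s else s+(m-1)) (u + of_nat 1)"
      by (rule cas_eq) (use a m in \<open>auto simp: g_def rem2_def\<close>)
    thus ?thesis unfolding DD xi_am_def by simp
  qed
  have 6: "D a (a+1) = xi_am N w a (m+1) u"
  proof -
    have "casorati N w (\<lambda>s. g (rem2 a (a+1) s)) u = casorati N w (\<lambda>s. if s < a then s else s+(m+1)) (u + of_nat 0)"
      by (rule cas_eq) (use a m in \<open>auto simp: g_def rem2_def\<close>)
    thus ?thesis unfolding DD xi_am_def by simp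
  qed
  show ?thesis using P unfolding 1 2 3 4 5 6 by simp
qed

lemma xi_shift:
  fixes w :: "nat \<Rightarrow> complex \<Rightarrow> 'f::field"
  assumes N: "N = Suc M"
    and rec: "\<And>r. r < N \<Longrightarrow> w (r+1) (u + of_nat N) = (\<Sum>j<N. c j * w (r+1) (u + of_nat j))"
  shows "xi0 N w (u+1) = (-1)^M * c 0 * xi0 N w u"
proof -
  define T where "T r s = w (r+1) (u + 1 + of_nat s)" for r s
  define C where "C r = dt M (\<lambda>r' s. T (insert_index r r') s)" for r
  define G where "G v = (\<Sum>r<Suc M. (-1)^r * v r * C r)" for v
  have ins: "dt (Suc M) (\<lambda>r s. if s < p then T r s else if s = p then v r else T r (s-1)) = (-1)^p * G v"
    if "p \<le> M" for p v
  proof -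
    have "dt (Suc M) (\<lambda>r s. if s < p then T r s else if s = p then v r else T r (s-1))
        = (\<Sum>r<Suc M. (-1)^(r+p) * v r * C r)"
      unfolding C_def by (rule dt_ins[OF that])
    also have "\<dots> = (-1)^p * G v" unfolding G_def sum_distrib_left
      by (rule sum.cong) (auto simp: power_add ac_simps)
    finally show ?thesis .
  qed
  have "xi0 N w (u+1) = dt (Suc M) (\<lambda>r s. if s < M then T r s else if s = M then w (r+1) (u + of_nat N) else T r (s-1))"
    unfolding xi0_def cas_dt N by (rule dt_cong) (auto simp: T_def add_ac less_Suc_eq)
  also have "\<dots> = (-1)^M * G (\<lambda>r. w (r+1) (u + of_nat N))" by (rule ins) simp
  also have "G (\<lambda>r. w (r+1) (u + of_nat N)) = (\<Sum>j<N. c j * G (\<lambda>r. w (r+1) (u + of_nat j)))"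
  proof -
    have "G (\<lambda>r. w (r+1) (u + of_nat N)) = (\<Sum>r<Suc M. \<Sum>j<N. c j * ((-1)^r * w (r+1) (u + of_nat j) * C r))"
      unfolding G_def
    proof (rule sum.cong[OF refl])
      fix r assume "r \<in> {..<Suc M}"
      hence rN: "r < N" using N by simp
      show "(-1)^r * w (r+1) (u + of_nat N) * C r = (\<Sum>j<N. c j * ((-1)^r * w (r+1) (u + of_nat j) * C r))"
        unfolding rec[OF rN] sum_distrib_left sum_distrib_right by (rule sum.cong) (auto simp: ac_simps)
    qed
    also have "\<dots> = (\<Sum>j<N. c j * G (\<lambda>r. w (r+1) (u + of_nat j)))"
      unfolding G_def sum_distrib_left by (rule sum.swap)
    finally show ?thesis .
  qed
  also have "\<dots> = c 0 * G (\<lambda>r. w (r+1) u)"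
  proof -
    have z: "G (\<lambda>r. w (r+1) (u + of_nat (Suc j))) = 0" if j: "j < M" for j
    proof -
      have "G (\<lambda>r. w (r+1) (u + of_nat (Suc j))) = (-1)^M * ((-1)^M * G (\<lambda>r. w (r+1) (u + of_nat (Suc j))))"
        by simp
      also have "(-1)^M * G (\<lambda>r. w (r+1) (u + of_nat (Suc j)))
         = dt (Suc M) (\<lambda>r s. if s < M then T r s else if s = M then w (r+1) (u + of_nat (Suc j)) else T r (s-1))"
        by (rule ins[symmetric]) simp
      also have "\<dots> = 0"
        by (rule dt_ident_cols[of M _ j]) (use j in \<open>auto simp: T_def add_ac\<close>)
      finally show ?thesis by simp
    qed
    show ?thesis unfolding N sum.lessThan_Suc_shift using z by simp
  qed
  also have "G (\<lambda>r. w (r+1) u) = xi0 N w u"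
  proof -
    have "G (\<lambda>r. w (r+1) u) = (-1)^0 * G (\<lambda>r. w (r+1) u)" by simp
    also have "\<dots> = dt (Suc M) (\<lambda>r s. if s < 0 then T r s else if s = 0 then w (r+1) u else T r (s-1))"
      by (rule ins[symmetric]) simp
    also have "\<dots> = xi0 N w u"
      unfolding xi0_def cas_dt N by (rule dt_cong) (auto simp: T_def add_ac)
    finally show ?thesis .
  qed
  finally show ?thesis by (simp add: ac_simps)
qed

fun coef :: "(complex \<Rightarrow> 'f::field) list \<Rightarrow> nat \<Rightarrow> complex \<Rightarrow> 'f" where
  "coef [] j u = (if j = 0 then 1 else 0)"
| "coef (g # gs) j u = g u * coef gs j u - (if j = 0 then 0 else coef gs (j - 1) (u + 1))"

definition opL :: "(complex \<Rightarrow> 'f::field) list \<Rightarrow> (complex \<Rightarrow> 'f) \<Rightarrow> complex \<Rightarrow> 'f" where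
  "opL gs w = foldr (\<lambda>g f u. g u * f u - f (u + 1)) gs w"

lemma opL_expand: "length gs \<le> K \<Longrightarrow> opL gs w u = (\<Sum>j\<le>K. coef gs j u * w (u + of_nat j))"
proof (induction gs arbitrary: K u)
  case Nil
  have "(\<Sum>j\<le>K. coef [] j u * w (u + of_nat j)) = (\<Sum>j\<in>{0}. coef [] j u * w (u + of_nat j))"
    by (rule sum.mono_neutral_right) auto
  thus ?case by (simp add: opL_def)
next
  case (Cons g gs)
  obtain K' where K: "K = Suc K'" and K': "length gs \<le> K'" using Cons.prems by (cases K) auto
  have "opL (g # gs) w u = g u * opL gs w u - opL gs w (u + 1)" by (simp add: opL_def)
  also have "\<dots> = g u * (\<Sum>j\<le>K. coef gs j u * w (u + of_nat j)) - (\<Sum>j\<le>K'. coef gs j (u+1) * w (u + 1 + of_nat j))"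
    using Cons.IH[of K u] Cons.IH[OF K', of "u+1"] K K' by simp
  also have "(\<Sum>j\<le>K'. coef gs j (u+1) * w (u + 1 + of_nat j))
     = (\<Sum>j\<le>K. (if j = 0 then 0 else coef gs (j - 1) (u + 1)) * w (u + of_nat j))"
    unfolding K sum.atMost_Suc_shift by (simp add: add_ac)
  finally show ?case
    by (simp add: sum_distrib_left sum_subtractf[symmetric] algebra_simps)
qed

lemma coef_zero: "length gs < j \<Longrightarrow> coef gs j u = 0"
  by (induction gs arbitrary: j u) auto

lemma coef_top: "coef gs (length gs) u = (-1) ^ length gs"
  by (induction gs arbitrary: u) (auto simp: coef_zero)

lemma coef_0: "coef gs 0 u = prod_list (map (\<lambda>g. g u) gs)"
  by (induction gs arbitrary: u) auto

lemma q_nz: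
  fixes q :: "nat \<Rightarrow> complex \<Rightarrow> 'f::field"
  assumes Kin: "alg_indep_int (\<lambda>(a, u). q a u) ({1..n} \<times> UNIV)" and a: "1 \<le> a" "a \<le> n"
  shows "q a x \<noteq> 0"
proof
  assume q0: "q a x = 0"
  define e0 where "e0 = (\<lambda>i. if i = (a,x) then (1::nat) else 0)"
  define c where "c e = (if e = e0 then (1::int) else 0)" for e
  have ce: "{e. c e \<noteq> 0} = {e0}" by (auto simp: c_def)
  have "\<forall>e. c e = 0"
    using Kin unfolding alg_indep_int_def
    apply (rule allE[where x="{(a,x)}"])
    apply (erule allE[where x=c])
    apply (erule mp)
    using a q0 by (auto simp: ce c_def e0_def)
  hence "c e0 = 0" by blast
  thus False by (simp add: c_def)
qed

lemma Yf_nz: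
  assumes qnz: "\<And>a x. 1 \<le> a \<Longrightarrow> a \<le> n \<Longrightarrow> q a x \<noteq> 0" and a: "a \<le> n"
  shows "Yf q n a v \<noteq> 0"
  using qnz[of a] a by (auto simp: Yf_def)

lemma prod_top:
  fixes q :: "nat \<Rightarrow> complex \<Rightarrow> 'f::field"
  assumes qnz: "\<And>a x. 1 \<le> a \<Longrightarrow> a \<le> n \<Longrightarrow> q a x \<noteq> 0"
  shows "k \<le> n \<Longrightarrow> (\<Prod>i\<in>{1..<Suc k}. xf q n i (u + of_nat n + 1 - of_nat i)) = Yf q n k (u + of_nat n + 1 - of_nat k / 2)"
proof (induction k)
  case 0
  then show ?case by (simp add: Yf_def)
next
  case (Suc k)
  define B where "B = Yf q n k (u + of_nat n + 1 - of_nat k / 2)"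
  define C where "C = Yf q n (Suc k) (u + of_nat n + 1 - of_nat (Suc k) / 2)"
  have "(\<Prod>i\<in>{1..<Suc (Suc k)}. xf q n i (u + of_nat n + 1 - of_nat i))
     = B * xf q n (Suc k) (u + of_nat n + 1 - of_nat (Suc k))"
    using Suc unfolding B_def by (simp add: prod.atLeastLessThan_Suc)
  also have "xf q n (Suc k) (u + of_nat n + 1 - of_nat (Suc k)) = C / B"
    using Suc.prems unfolding B_def C_def by (simp add: xf_def zf_def field_simps)
  finally have eq: "(\<Prod>i\<in>{1..<Suc (Suc k)}. xf q n i (u + of_nat n + 1 - of_nat i)) = B * (C / B)" .
  have "B \<noteq> 0" unfolding B_def
    by (rule Yf_nz) (use qnz Suc.prems in auto)
  thus ?case unfolding eq C_def by simp
qed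

lemma prod_bot:
  fixes q :: "nat \<Rightarrow> complex \<Rightarrow> 'f::field"
  assumes qnz: "\<And>a x. 1 \<le> a \<Longrightarrow> a \<le> n \<Longrightarrow> q a x \<noteq> 0"
  shows "k \<le> n \<Longrightarrow> (\<Prod>i\<in>{2*n+3-k..<2*n+3}. xf q n i (u + of_nat n + 1 - of_nat i)) = 1 / Yf q n k (u + of_nat k / 2)"
proof (induction k)
  case 0
  then show ?case by (simp add: Yf_def)
next
  case (Suc k)
  define B where "B = Yf q n k (u + of_nat k / 2)"
  define C where "C = Yf q n (Suc k) (u + of_nat (Suc k) / 2)"
  have set: "{2*n+3 - Suc k..<2*n+3} = insert (2*n+2-k) {2*n+3-k..<2*n+3}" using Suc.prems by auto
  have "(\<Prod>i\<in>{2*n+3 - Suc k..<2*n+3}. xf q n i (u + of_nat n + 1 - of_nat i))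
     = xf q n (2*n+2-k) (u + of_nat n + 1 - of_nat (2*n+2-k)) * (1 / B)"
    unfolding set using Suc unfolding B_def by (simp add: prod.insert)
  also have "xf q n (2*n+2-k) (u + of_nat n + 1 - of_nat (2*n+2-k)) = B / C"
  proof -
    have i: "\<not> (1 \<le> 2*n+2-k \<and> 2*n+2-k \<le> n)" "2*n+2-k \<noteq> n+1" "2*n+2-k \<noteq> n+2" "2*n+3-(2*n+2-k) = Suc k"
      using Suc.prems by auto
    have o: "(of_nat (2*n+2-k) :: complex) = 2 * of_nat n + 2 - of_nat k" using Suc.prems by (simp add: of_nat_diff)
    show ?thesis unfolding xf_def Let_def if_not_P[OF i(1)] if_not_P[OF i(2)] if_not_P[OF i(3)] i(4) o
      unfolding zbarf_def B_def C_def by (simp add: field_simps)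
  qed
  finally have eq: "(\<Prod>i\<in>{2*n+3 - Suc k..<2*n+3}. xf q n i (u + of_nat n + 1 - of_nat i)) = B / C * (1 / B)" .
  have "B \<noteq> 0" unfolding B_def
    by (rule Yf_nz) (use qnz Suc.prems in auto)
  thus ?case unfolding eq C_def by simp
qed

lemma prod_all:
  fixes q :: "nat \<Rightarrow> complex \<Rightarrow> 'f::field"
  assumes qnz: "\<And>a x. 1 \<le> a \<Longrightarrow> a \<le> n \<Longrightarrow> q a x \<noteq> 0" and n: "1 \<le> n"
  shows "(\<Prod>i\<in>{1..<2*n+3}. xf q n i (u + of_nat n + 1 - of_nat i)) = -1"
proof -
  let ?f = "\<lambda>i. xf q n i (u + of_nat n + 1 - of_nat i)"
  have set: "{1..<2*n+3} = {1..<Suc n} \<union> ({n+1, n+2} \<union> {2*n+3-n..<2*n+3})" by auto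
  have "prod ?f {1..<2*n+3} = prod ?f {1..<Suc n} * (?f (n+1) * ?f (n+2) * prod ?f {2*n+3-n..<2*n+3})"
    unfolding set by (subst prod.union_disjoint; simp add: prod.union_disjoint)
  also have "prod ?f {1..<Suc n} = Yf q n n (u + of_nat n + 1 - of_nat n / 2)"
    by (rule prod_top[OF qnz]) auto
  also have "prod ?f {2*n+3-n..<2*n+3} = 1 / Yf q n n (u + of_nat n / 2)"
    by (rule prod_bot[OF qnz]) auto
  also have "?f (n+1) = xf q n (n+1) u" by simp
  also have "?f (n+2) = xf q n (n+2) (u - 1)" by simp
  finally have eq: "prod ?f {1..<2*n+3} = Yf q n n (u + of_nat n + 1 - of_nat n / 2) *
     (xf q n (n+1) u * xf q n (n+2) (u - 1) * (1 / Yf q n n (u + of_nat n / 2)))" .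
  define s where "s = u + of_nat n / 2"
  have m1: "xf q n (n+1) u = q n (u + of_nat n / 2) * q n (u + (of_nat n + 4) / 2) / (q n (u + (of_nat n + 2) / 2))^2"
    by (simp add: xf_def)
  have m2: "xf q n (n+2) (u-1) = - (q n (u - 1 + of_nat n / 2) * q n (u - 1 + (of_nat n + 4) / 2) / (q n (u - 1 + (of_nat n + 2) / 2))^2)"
    by (simp add: xf_def)
  have y1: "Yf q n n (u + of_nat n + 1 - of_nat n / 2) = q n (u + of_nat n + 1 - of_nat n / 2 - 2 / 2) / q n (u + of_nat n + 1 - of_nat n / 2 + 2 / 2)"
    using n by (simp add: Yf_def dd_def)
  have y2: "Yf q n n s = q n (s - 1) / q n (s + 1)"
    using n by (simp add: Yf_def dd_def)
  have r: "u + (of_nat n + 4) / 2 = s + 2" "u + (of_nat n + 2) / 2 = s + 1" "u + of_nat n / 2 = s"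
     "u - 1 + of_nat n / 2 = s - 1" "u - 1 + (of_nat n + 4) / 2 = s + 1" "u - 1 + (of_nat n + 2) / 2 = s"
     "u + of_nat n + 1 - of_nat n / 2 - 2 / 2 = s" "u + of_nat n + 1 - of_nat n / 2 + 2 / 2 = s + 2"
     "u + of_nat n / 2 - 2 / 2 = s - 1" "u + of_nat n / 2 + 2 / 2 = s + 1"
    unfolding s_def by (simp_all add: field_simps)
  have nz: "q n (s-1) \<noteq> 0" "q n s \<noteq> 0" "q n (s+1) \<noteq> 0" "q n (s+2) \<noteq> 0" using qnz n by auto
  show ?thesis unfolding eq m1 m2 y1 y2 r using nz by (simp add: field_simps power2_eq_square)
qed

lemma xi_per:
  fixes q :: "nat \<Rightarrow> complex \<Rightarrow> 'f::field"
  assumes qnz: "\<And>a x. 1 \<le> a \<Longrightarrow> a \<le> n \<Longrightarrow> q a x \<noteq> 0" and n: "1 \<le> n"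
    and Lw: "\<forall>m\<in>{1..2*n+2}. \<forall>u. applyL q n (w m) u = 0"
  shows "xi0 (2*n+2) w (u+1) = - xi0 (2*n+2) w u"
proof -
  define gs where "gs = map (\<lambda>i u. xf q n i (u + of_nat n + 1 - of_nat i)) [1..<2*n+3]"
  have len: "length gs = 2*n+2" unfolding gs_def by simp
  have aL: "applyL q n f = opL gs f" for f
    unfolding applyL_def opL_def gs_def foldr_map o_def ..
  have rec: "w (r+1) (u + of_nat (2*n+2)) = (\<Sum>j<2*n+2. (- coef gs j u) * w (r+1) (u + of_nat j))"
    if r: "r < 2*n+2" for r
  proof -
    have "0 = applyL q n (w (r+1)) u" using Lw r by auto
    also have "\<dots> = (\<Sum>j\<le>2*n+2. coef gs j u * w (r+1) (u + of_nat j))"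
      unfolding aL by (rule opL_expand) (simp add: len)
    also have "\<dots> = (\<Sum>j<2*n+2. coef gs j u * w (r+1) (u + of_nat j)) + w (r+1) (u + of_nat (2*n+2))"
      using coef_top[of gs u] unfolding len by (simp add: lessThan_Suc_atMost[symmetric])
    finally have h: "0 = (\<Sum>j<2*n+2. coef gs j u * w (r+1) (u + of_nat j)) + w (r+1) (u + of_nat (2*n+2))" .
    have s: "(\<Sum>j<2*n+2. (- coef gs j u) * w (r+1) (u + of_nat j)) = - (\<Sum>j<2*n+2. coef gs j u * w (r+1) (u + of_nat j))"
      by (simp add: sum_negf[symmetric])
    show ?thesis unfolding s using h by (metis add.commute eq_neg_iff_add_eq_0)
  qed
  have "xi0 (2*n+2) w (u+1) = (-1)^(2*n+1) * (- coef gs 0 u) * xi0 (2*n+2) w u"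
    by (rule xi_shift[of _ "2*n+1"]) (use rec in auto)
  also have "coef gs 0 u = -1"
  proof -
    have "coef gs 0 u = prod_list (map (\<lambda>i. xf q n i (u + of_nat n + 1 - of_nat i)) [1..<2*n+3])"
      unfolding coef_0 gs_def by (simp add: o_def)
    also have "\<dots> = (\<Prod>i\<in>{1..<2*n+3}. xf q n i (u + of_nat n + 1 - of_nat i))"
      by (subst prod.distinct_set_conv_list[symmetric]) auto
    also have "\<dots> = -1" by (rule prod_all[OF qnz n])
    finally show ?thesis .
  qed
  finally show ?thesis by simp
qed

theorem mainTheorem10:
  fixes n :: nat
    and q :: "nat \<Rightarrow> complex \<Rightarrow> 'f::field"
    and w :: "nat \<Rightarrow> complex \<Rightarrow> 'f"
    and T :: "nat \<Rightarrow> nat \<Rightarrow> complex \<Rightarrow> 'f"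
  assumes n2: "n \<ge> 2"
    and Kin: "alg_indep_int (\<lambda>(a, u). q a u) ({1..n} \<times> UNIV)"
    and Lw: "\<forall>m\<in>{1..2*n+2}. \<forall>u. applyL q n (w m) u = 0"
    and xi_nz: "\<forall>u. xi0 (2*n+2) w u \<noteq> 0"
    and T0: "\<forall>m u. T 0 m u = 1"
    and Ta0: "\<forall>a\<le>n. \<forall>u. T a 0 u = 1"
    and Tn_nz: "\<forall>m u. T n m u \<noteq> 0"
    and H1: "\<forall>a u m. 1 \<le> a \<and> a \<le> n - 1 \<longrightarrow>
              T a m (u + (of_nat a + of_nat m - 1) / 2)
                = (-1) ^ m * xi_am (2*n+2) w a m u / xi0 (2*n+2) w u"
    and H2: "\<forall>u m. T n m (u + (of_nat n + 2 * of_nat m) / 2) * T n m (u + (of_nat n + 2 * of_nat m - 2) / 2)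
                = xi_am (2*n+2) w n (2*m) u / xi0 (2*n+2) w u"
    and H3: "\<forall>u m. T n m (u + (of_nat n + 2 * of_nat m) / 2) * T n (m + 1) (u + (of_nat n + 2 * of_nat m) / 2)
                = xi_am (2*n+2) w n (2*m+1) u / xi0 (2*n+2) w (u + 1)"
    and H4: "\<forall>u m. (T n m (u + (of_nat n + 2 * of_nat m) / 2))^2
                = xi_am (2*n+2) w (n+1) (2*m) u / xi0 (2*n+2) w u"
  shows "(\<forall>u a m. 1 \<le> a \<and> a \<le> n - 2 \<and> m \<ge> 1 \<longrightarrow>
            T a m (u - 1/2) * T a m (u + 1/2)
              = T a (m + 1) u * T a (m - 1) u + T (a - 1) m u * T (a + 1) m u)
       \<and> (\<forall>u m. m \<ge> 1 \<longrightarrow>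
            T (n - 1) (2*m) (u - 1/2) * T (n - 1) (2*m) (u + 1/2)
              = T (n - 1) (2*m + 1) u * T (n - 1) (2*m - 1) u
                + T (n - 2) (2*m) u * T n m (u - 1/2) * T n m (u + 1/2))
       \<and> (\<forall>u m.
            T (n - 1) (2*m + 1) (u - 1/2) * T (n - 1) (2*m + 1) (u + 1/2)
              = T (n - 1) (2*m + 2) u * T (n - 1) (2*m) u
                + T (n - 2) (2*m + 1) u * T n m u * T n (m + 1) u)
       \<and> (\<forall>u m. m \<ge> 1 \<longrightarrow>
            T n m (u - 1) * T n m (u + 1)
              = T n (m + 1) u * T n (m - 1) u + T (n - 1) (2*m) u)"

proof -
  define N where "N = 2*n+2"
  define X where "X a m u = xi_am N w a m u" for a m u
  define Z where "Z u = xi0 N w u" for u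
  have n1: "1 \<le> n" using n2 by simp
  have qnz: "\<And>a x. 1 \<le> a \<Longrightarrow> a \<le> n \<Longrightarrow> q a x \<noteq> 0" by (rule q_nz[OF Kin])
  have per: "Z (u+1) = - Z u" for u unfolding Z_def N_def by (rule xi_per[OF qnz n1 Lw])
  have perm: "Z (u-1) = - Z u" for u using per[of "u-1"] by simp
  have Znz: "Z u \<noteq> 0" for u using xi_nz unfolding Z_def N_def by simp
  have Zm: "Z (u + of_nat m) = (-1)^m * Z u" for u m
  proof (induction m)
    case (Suc m)
    have "Z (u + of_nat (Suc m)) = Z ((u + of_nat m) + 1)" by (simp add: add_ac)
    also have "\<dots> = - Z (u + of_nat m)" by (rule per)
    finally show ?case using Suc by simp
  qed simp
  have X0: "X 0 m u = (-1)^m * Z u" for m u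
  proof -
    have "X 0 m u = casorati N w (\<lambda>s. s) (u + of_nat m)"
      unfolding X_def xi_am_def by (rule cas_eq) simp
    thus ?thesis using Zm unfolding Z_def xi0_def by simp
  qed
  have HT: "T a m x = (-1)^m * X a m u / Z u" if a: "a \<le> n - 1" and x: "x = u + (of_nat a + of_nat m - 1) / 2" for a m x u
  proof (cases "a = 0")
    case True
    thus ?thesis using T0 X0 Znz by simp
  next
    case False
    have "T a m (u + (of_nat a + of_nat m - 1) / 2) = (-1)^m * xi_am (2*n+2) w a m u / xi0 (2*n+2) w u"
      using H1 a False by simp
    thus ?thesis unfolding x X_def Z_def N_def .
  qed
  have PL: "X a m (u+1) * X a m u = X (a-1) m (u+1) * X (a+1) m u + X a (m-1) (u+1) * X a (m+1) u"
    if "1 \<le> a" "a \<le> n" "1 \<le> m" for a m u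
    unfolding X_def by (rule cas_pl) (use that in \<open>auto simp: N_def\<close>)
  have c1: "T a m (v - 1/2) * T a m (v + 1/2) = T a (m + 1) v * T a (m - 1) v + T (a - 1) m v * T (a + 1) m v"
    if a: "1 \<le> a" "a \<le> n - 2" and m: "1 \<le> m" for v a m
  proof -
    define u where "u = v - (of_nat a + of_nat m) / 2"
    have oa: "of_nat (a - 1) = (of_nat a - 1 :: complex)" "of_nat (m - 1) = (of_nat m - 1 :: complex)"
      "of_nat (a - Suc 0) = (of_nat a - 1 :: complex)" "of_nat (m - Suc 0) = (of_nat m - 1 :: complex)"
      using a m by (simp_all add: of_nat_diff)
    have t1: "T a m (v - 1/2) = (-1)^m * X a m u / Z u"
      by (rule HT) (use a in \<open>auto simp: u_def field_simps\<close>)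
    have t2: "T a m (v + 1/2) = (-1)^m * X a m (u+1) / Z (u+1)"
      by (rule HT) (use a in \<open>auto simp: u_def field_simps\<close>)
    have t3: "T a (m+1) v = (-1)^(m+1) * X a (m+1) u / Z u"
      by (rule HT) (use a in \<open>auto simp: u_def field_simps\<close>)
    have t4: "T a (m-1) v = (-1)^(m-1) * X a (m-1) (u+1) / Z (u+1)"
      by (rule HT) (use a in \<open>auto simp: oa u_def field_simps\<close>)
    have t5: "T (a-1) m v = (-1)^m * X (a-1) m (u+1) / Z (u+1)"
      by (rule HT) (use a in \<open>auto simp: oa u_def field_simps\<close>)
    have t6: "T (a+1) m v = (-1)^m * X (a+1) m u / Z u"
      by (rule HT) (use a in \<open>auto simp: u_def field_simps\<close>)
    have P: "X a m (u+1) * X a m u = X (a-1) m (u+1) * X (a+1) m u + X a (m-1) (u+1) * X a (m+1) u"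
      by (rule PL) (use a m in auto)
    have sg: "(-1::'f)^(m+1) * (-1)^(m-1) = 1"
    proof -
      obtain m' where "m = Suc m'" using m by (cases m) auto
      thus ?thesis by simp
    qed
    have z: "Z u \<noteq> 0" "Z (u+1) \<noteq> 0" using Znz by auto
    show ?thesis unfolding t1 t2 t3 t4 t5 t6
    proof -
      have "(-1)^m * X a m u / Z u * ((-1)^m * X a m (u+1) / Z (u+1)) = X a m (u+1) * X a m u / (Z u * Z (u+1))"
        by (simp add: field_simps)
      also have "\<dots> = ((-1)^(m+1) * (-1)^(m-1)) * X a (m+1) u * X a (m-1) (u+1) / (Z u * Z (u+1))
          + ((-1)^m * (-1)^m) * X (a-1) m (u+1) * X (a+1) m u / (Z u * Z (u+1))"
        unfolding P sg by (simp add: add_divide_distrib ac_simps)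
      also have "\<dots> = (-1)^(m+1) * X a (m+1) u / Z u * ((-1)^(m-1) * X a (m-1) (u+1) / Z (u+1)) +
         (-1)^m * X (a-1) m (u+1) / Z (u+1) * ((-1)^m * X (a+1) m u / Z u)"
        using z by (simp add: field_simps)
      finally show "(-1)^m * X a m u / Z u * ((-1)^m * X a m (u+1) / Z (u+1)) = (-1)^(m+1) * X a (m+1) u / Z u * ((-1)^(m-1) * X a (m-1) (u+1) / Z (u+1)) +
         (-1)^m * X (a-1) m (u+1) / Z (u+1) * ((-1)^m * X (a+1) m u / Z u)" .
    qed
  qed
  have H2': "T n m x * T n m y = X n (2*m) u / Z u"
    if "x = u + (of_nat n + 2 * of_nat m) / 2" "y = u + (of_nat n + 2 * of_nat m - 2) / 2" for x y u m
    using H2 unfolding that X_def Z_def N_def by simp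
  have H3': "T n m x * T n (m+1) x = X n (2*m+1) u / Z (u+1)"
    if "x = u + (of_nat n + 2 * of_nat m) / 2" for x u m
    using H3 unfolding that X_def Z_def N_def by simp
  have H4': "(T n m x)^2 = X (n+1) (2*m) u / Z u"
    if "x = u + (of_nat n + 2 * of_nat m) / 2" for x u m
    using H4 unfolding that X_def Z_def N_def by simp
  have on: "of_nat (n - 1) = (of_nat n - 1 :: complex)" "of_nat (n - Suc 0) = (of_nat n - 1 :: complex)"
      "of_nat (n - 2) = (of_nat n - 2 :: complex)"
    using n2 by (simp_all add: of_nat_diff)
  have c2: "T (n - 1) (2*m) (v - 1/2) * T (n - 1) (2*m) (v + 1/2)
              = T (n - 1) (2*m + 1) v * T (n - 1) (2*m - 1) v
                + T (n - 2) (2*m) v * T n m (v - 1/2) * T n m (v + 1/2)"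
    if m: "1 \<le> m" for v m
  proof -
    define u where "u = v - (of_nat n + 2 * of_nat m - 1) / 2"
    have om: "of_nat (2*m - 1) = (2 * of_nat m - 1 :: complex)" "of_nat (2*m - Suc 0) = (2 * of_nat m - 1 :: complex)"
      "of_nat (m*2 - Suc 0) = (2 * of_nat m - 1 :: complex)"
      using m by (simp_all add: of_nat_diff)
    have t1: "T (n-1) (2*m) (v - 1/2) = (-1)^(2*m) * X (n-1) (2*m) u / Z u"
      by (rule HT) (auto simp: on u_def field_simps)
    have t2: "T (n-1) (2*m) (v + 1/2) = (-1)^(2*m) * X (n-1) (2*m) (u+1) / Z (u+1)"
      by (rule HT) (auto simp: on u_def field_simps)
    have t3: "T (n-1) (2*m+1) v = (-1)^(2*m+1) * X (n-1) (2*m+1) u / Z u"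
      by (rule HT) (auto simp: on u_def field_simps)
    have t4: "T (n-1) (2*m-1) v = (-1)^(2*m-1) * X (n-1) (2*m-1) (u+1) / Z (u+1)"
      by (rule HT) (auto simp: on om u_def field_simps)
    have t5: "T (n-2) (2*m) v = (-1)^(2*m) * X (n-2) (2*m) (u+1) / Z (u+1)"
      by (rule HT) (use n2 in \<open>auto simp: on u_def field_simps\<close>)
    have t6: "T n m (v - 1/2) * T n m (v + 1/2) = X n (2*m) u / Z u"
      by (subst mult.commute, rule H2') (auto simp: u_def field_simps)
    have P: "X (n-1) (2*m) (u+1) * X (n-1) (2*m) u = X (n-1-1) (2*m) (u+1) * X (n-1+1) (2*m) u
        + X (n-1) (2*m-1) (u+1) * X (n-1) (2*m+1) u"
      by (rule PL) (use n2 m in auto)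
    have nn: "n - 1 - 1 = n - 2" "n - 1 + 1 = n" using n2 by auto
    have sg: "(-1::'f)^(2*m) = 1" "(-1::'f)^(2*m+1) = -1" "(-1::'f)^(2*m-1) = -1"
    proof -
      obtain m' where "m = Suc m'" using m by (cases m) auto
      thus "(-1::'f)^(2*m) = 1" "(-1::'f)^(2*m+1) = -1" "(-1::'f)^(2*m-1) = -1" by simp_all
    qed
    have z: "Z u \<noteq> 0" "Z (u+1) \<noteq> 0" using Znz by auto
    have "T (n - 1) (2*m) (v - 1/2) * T (n - 1) (2*m) (v + 1/2) = X (n-1) (2*m) (u+1) * X (n-1) (2*m) u / (Z u * Z (u+1))"
      unfolding t1 t2 sg by (simp add: field_simps)
    also have "\<dots> = X (n-1) (2*m+1) u * X (n-1) (2*m-1) (u+1) / (Z u * Z (u+1))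
        + X (n-2) (2*m) (u+1) * X n (2*m) u / (Z u * Z (u+1))"
      unfolding P nn by (simp add: add_divide_distrib ac_simps)
    also have "\<dots> = T (n - 1) (2*m + 1) v * T (n - 1) (2*m - 1) v
                + T (n - 2) (2*m) v * (T n m (v - 1/2) * T n m (v + 1/2))"
      unfolding t3 t4 t5 t6 sg using z by (simp add: field_simps)
    finally show ?thesis by (simp add: mult.assoc)
  qed
  have c3: "T (n - 1) (2*m + 1) (v - 1/2) * T (n - 1) (2*m + 1) (v + 1/2)
              = T (n - 1) (2*m + 2) v * T (n - 1) (2*m) v
                + T (n - 2) (2*m + 1) v * T n m v * T n (m + 1) v" for v m
  proof -
    define u where "u = v - (of_nat n + 2 * of_nat m) / 2"
    have t1: "T (n-1) (2*m+1) (v - 1/2) = (-1)^(2*m+1) * X (n-1) (2*m+1) u / Z u"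
      by (rule HT) (auto simp: on u_def field_simps)
    have t2: "T (n-1) (2*m+1) (v + 1/2) = (-1)^(2*m+1) * X (n-1) (2*m+1) (u+1) / Z (u+1)"
      by (rule HT) (auto simp: on u_def field_simps)
    have t3: "T (n-1) (2*m+2) v = (-1)^(2*m+2) * X (n-1) (2*m+2) u / Z u"
      by (rule HT) (auto simp: on u_def field_simps)
    have t4: "T (n-1) (2*m) v = (-1)^(2*m) * X (n-1) (2*m) (u+1) / Z (u+1)"
      by (rule HT) (auto simp: on u_def field_simps)
    have t5: "T (n-2) (2*m+1) v = (-1)^(2*m+1) * X (n-2) (2*m+1) (u+1) / Z (u+1)"
      by (rule HT) (use n2 in \<open>auto simp: on u_def field_simps\<close>)
    have t6: "T n m v * T n (m+1) v = X n (2*m+1) u / Z (u+1)"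
      by (rule H3') (auto simp: u_def field_simps)
    have P: "X (n-1) (2*m+1) (u+1) * X (n-1) (2*m+1) u = X (n-1-1) (2*m+1) (u+1) * X (n-1+1) (2*m+1) u
        + X (n-1) (2*m+1-1) (u+1) * X (n-1) (2*m+1+1) u"
      by (rule PL) (use n2 in auto)
    have nn: "n - 1 - 1 = n - 2" "n - 1 + 1 = n" "2*m+1-1 = 2*m" "2*m+1+1 = 2*m+2" using n2 by auto
    have sg: "(-1::'f)^(2*m) = 1" "(-1::'f)^(2*m+1) = -1" "(-1::'f)^(2*m+2) = 1" by simp_all
    have z: "Z u \<noteq> 0" "Z (u+1) \<noteq> 0" using Znz by auto
    have zp: "Z (u+1) = - Z u" by (rule per)
    have "T (n - 1) (2*m+1) (v - 1/2) * T (n - 1) (2*m+1) (v + 1/2) = X (n-1) (2*m+1) (u+1) * X (n-1) (2*m+1) u / (Z u * Z (u+1))"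
      unfolding t1 t2 sg by (simp add: field_simps)
    also have "\<dots> = X (n-1) (2*m+2) u * X (n-1) (2*m) (u+1) / (Z u * Z (u+1))
        + X (n-2) (2*m+1) (u+1) * X n (2*m+1) u / (Z u * Z (u+1))"
      unfolding P nn by (simp add: add_divide_distrib ac_simps)
    also have "\<dots> = T (n - 1) (2*m + 2) v * T (n - 1) (2*m) v
                + T (n - 2) (2*m + 1) v * (T n m v * T n (m + 1) v)"
      unfolding t3 t4 t5 t6 sg using z unfolding zp by (simp add: field_simps)
    finally show ?thesis by (simp add: mult.assoc)
  qed
  have c4: "T n m (t - 1) * T n m (t + 1) = T n (m + 1) t * T n (m - 1) t + T (n - 1) (2*m) t"
    if m: "1 \<le> m" for t m
  proof -
    define u where "u = t + 1 - (of_nat n + 2 * of_nat m) / 2"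
    obtain m' where m': "m = Suc m'" using m by (cases m) auto
    have om: "(of_nat m' :: complex) = of_nat m - 1" using m' by simp
    have p1: "T n m (t+1) * T n m t = X n (2*m) u / Z u"
      by (rule H2') (auto simp: u_def field_simps)
    have p2: "T n m t * T n m (t-1) = X n (2*m) (u-1) / Z (u-1)"
      by (rule H2') (auto simp: u_def field_simps)
    have p3: "T n m t * T n (m+1) t = X n (2*m+1) (u-1) / Z (u-1+1)"
      by (rule H3') (auto simp: u_def field_simps)
    have p4': "T n m' t * T n (m'+1) t = X n (2*m'+1) u / Z (u+1)"
      by (rule H3') (auto simp: om u_def field_simps)
    have p5: "T (n-1) (2*m) t = (-1)^(2*m) * X (n-1) (2*m) u / Z u"
      by (rule HT) (auto simp: on u_def field_simps)
    have p6: "(T n m t)^2 = X (n+1) (2*m) (u-1) / Z (u-1)"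
      by (rule H4') (auto simp: u_def field_simps)
    have P: "X n (2*m) (u-1+1) * X n (2*m) (u-1) = X (n-1) (2*m) (u-1+1) * X (n+1) (2*m) (u-1)
        + X n (2*m-1) (u-1+1) * X n (2*m+1) (u-1)"
      by (rule PL) (use n2 m in auto)
    have mm: "2*m' + 1 = 2*m - 1" "m' + 1 = m" "m - 1 = m'" using m' by auto
    have p4: "T n m' t * T n m t = X n (2*m-1) u / Z (u+1)" using p4' unfolding mm(1) mm(2) .
    have z: "Z u \<noteq> 0" "Z (u-1) \<noteq> 0" using Znz by auto
    have zp: "Z (u+1) = Z (u-1)" using per[of u] perm[of u] by simp
    have R: "T n m t \<noteq> 0" using Tn_nz by simp
    have "(T n m t)^2 * (T n m (t - 1) * T n m (t + 1)) = (T n m (t+1) * T n m t) * (T n m t * T n m (t-1))"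
      by (simp add: power2_eq_square ac_simps)
    also have "\<dots> = X n (2*m) u * X n (2*m) (u-1) / (Z u * Z (u-1))"
      unfolding p1 p2 by simp
    also have "\<dots> = X (n-1) (2*m) u * X (n+1) (2*m) (u-1) / (Z u * Z (u-1))
        + X n (2*m-1) u * X n (2*m+1) (u-1) / (Z u * Z (u-1))"
      using P by (simp add: add_divide_distrib ac_simps)
    also have "\<dots> = (T n m t * T n (m+1) t) * (T n m' t * T n m t) + (T n m t)^2 * T (n-1) (2*m) t"
      unfolding p3 p4 p5 p6 zp using z by (simp add: field_simps)
    also have "\<dots> = (T n m t)^2 * (T n (m + 1) t * T n (m - 1) t + T (n - 1) (2*m) t)"
      unfolding mm by (simp add: power2_eq_square algebra_simps)
    finally show ?thesis using R by simp
  qed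
  show ?thesis using c1 c2 c3 c4 by blast
qed

end
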